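(* Let $\zeta\in\mathbb{T}$, and let $F\in\mathrm{GL}(n,\mathbb{C})$ be admissible with respect to $\underline{d}=(d_1,\dots,d_n)\in\mathbb{Z}^n$, $\underline{d}'\in\mathbb{Z}^n$ and $d\in\mathbb{Z}$. Then there is a unique unital $*$-homomorphism $\rho:\textup{C}(\textup{U}^+_\zeta(F))\to \textup{C}(\mathbb{T},\textup{C}(\textup{U}^+_\zeta(F)))=\textup{C}(\textup{U}^+_\zeta(F))\otimes\textup{C}(\mathbb{T})$ such that $\rho_z(u_{ij})=z^{d_j-d_i}u_{ij}$ for all $1\le i,j\le n$ and $z\in\mathbb{T}$; moreover $\rho$ satisfies $(\rho\otimes\mathrm{id})\rho=(\mathrm{id}\otimes\Delta_{\mathbb{T}})\rho$ (with $\Delta_{\mathbb{T}}(z)=z\otimes z$) and the closed linear span of $\rho(\textup{C}(\textup{U}^+_\zeta(F)))(1\otimes \textup{C}(\mathbb{T}))$ is $\textup{C}(\textup{U}^+_\zeta(F))\otimes \textup{C}(\mathbb{T})$, so that $(\textup{C}(\textup{U}^+_\zeta(F)),\rho)$ is a $\mathbb{T}$-$\textup{C}^*$-algebra.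
   Context: A matrix $F=(F_{ij})\in \mathrm{GL}(n,\mathbb{C})$ with inverse $F^{-1}=(F^{ij})$ is admissible with respect to $\underline{d}=(d_1,\dots,d_n)$, $\underline{d}'=(d'_1,\dots,d'_n)\in\mathbb{Z}^n$ and $d\in\mathbb{Z}$ if $F_{ij}=0=F^{ji}$ whenever $-d_j+d\neq d'_i$. For such $F$ and $\zeta\in\mathbb{T}$, $\textup{C}(\textup{U}^+_\zeta(F))$ is the universal unital $\textup{C}^*$-algebra generated by elements $u_{ij}$, $1\le i,j\le n$, subject to the relations making the matrices $u=(u_{ij})$ and $F\overline{u}_\zeta F^{-1}$ unitary, where $\overline{u}_\zeta=(\zeta^{d_i(d_j-d_i)}u_{ij}^* )_{1\le i,j\le n}$. For $x\in X\otimes \textup{C}(\mathbb{T})\cong \textup{C}(\mathbb{T},X)$, $x(z)$ is written $\rho_z(\cdot)$ as indicated. *)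

theory Defs
  imports "HOL-Analysis.Analysis"
begin

class cstar_algebra = real_normed_algebra_1 + banach +
  fixes scaleC :: "complex \<Rightarrow> 'a \<Rightarrow> 'a" (infixr "*\<^sub>C" 75)
    and adj :: "'a \<Rightarrow> 'a"
  assumes scaleR_scaleC: "scaleR r x = complex_of_real r *\<^sub>C x"
    and scaleC_add_right: "a *\<^sub>C (x + y) = a *\<^sub>C x + a *\<^sub>C y"
    and scaleC_add_left: "(a + b) *\<^sub>C x = a *\<^sub>C x + b *\<^sub>C x"
    and scaleC_scaleC: "a *\<^sub>C (b *\<^sub>C x) = (a * b) *\<^sub>C x"
    and scaleC_one: "1 *\<^sub>C x = x"
    and mult_scaleC_left: "(a *\<^sub>C x) * y = a *\<^sub>C (x * y)"
    and mult_scaleC_right: "x * (a *\<^sub>C y) = a *\<^sub>C (x * y)"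
    and norm_scaleC: "norm (a *\<^sub>C x) = cmod a * norm x"
    and adj_adj: "adj (adj x) = x"
    and adj_add: "adj (x + y) = adj x + adj y"
    and adj_mult: "adj (x * y) = adj y * adj x"
    and adj_scaleC: "adj (a *\<^sub>C x) = cnj a *\<^sub>C adj x"
    and cstar_identity: "norm (adj x * x) = norm x * norm x"

definition unital_star_hom :: "('a::cstar_algebra \<Rightarrow> 'b::cstar_algebra) \<Rightarrow> bool" where
  "unital_star_hom \<phi> \<longleftrightarrow>
     (\<forall>x y. \<phi> (x + y) = \<phi> x + \<phi> y) \<and>
     (\<forall>c x. \<phi> (c *\<^sub>C x) = c *\<^sub>C \<phi> x) \<and>
     (\<forall>x y. \<phi> (x * y) = \<phi> x * \<phi> y) \<and>
     (\<forall>x. \<phi> (adj x) = adj (\<phi> x)) \<and>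
     \<phi> 1 = 1"

definition unitary_mat :: "nat \<Rightarrow> (nat \<Rightarrow> nat \<Rightarrow> 'a::cstar_algebra) \<Rightarrow> bool" where
  "unitary_mat n M \<longleftrightarrow>
     (\<forall>i\<in>{1..n}. \<forall>j\<in>{1..n}.
        (\<Sum>k=1..n. adj (M k i) * M k j) = (if i = j then 1 else 0) \<and>
        (\<Sum>k=1..n. M i k * adj (M j k)) = (if i = j then 1 else 0))"

definition inverse_cmat :: "nat \<Rightarrow> (nat \<Rightarrow> nat \<Rightarrow> complex) \<Rightarrow> (nat \<Rightarrow> nat \<Rightarrow> complex) \<Rightarrow> bool" where
  "inverse_cmat n F G \<longleftrightarrow>
     (\<forall>i\<in>{1..n}. \<forall>j\<in>{1..n}.
        (\<Sum>k=1..n. F i k * G k j) = (if i = j then 1 else 0) \<and>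
        (\<Sum>k=1..n. G i k * F k j) = (if i = j then 1 else 0))"

definition admissible :: "nat \<Rightarrow> (nat \<Rightarrow> nat \<Rightarrow> complex) \<Rightarrow> (nat \<Rightarrow> nat \<Rightarrow> complex)
    \<Rightarrow> (nat \<Rightarrow> int) \<Rightarrow> (nat \<Rightarrow> int) \<Rightarrow> int \<Rightarrow> bool" where
  "admissible n F Finv d d' dd \<longleftrightarrow>
     (\<forall>i\<in>{1..n}. \<forall>j\<in>{1..n}. - d j + dd \<noteq> d' i \<longrightarrow> F i j = 0 \<and> Finv j i = 0)"

definition ubar :: "complex \<Rightarrow> (nat \<Rightarrow> int) \<Rightarrow> (nat \<Rightarrow> nat \<Rightarrow> 'a::cstar_algebra) \<Rightarrow> nat \<Rightarrow> nat \<Rightarrow> 'a" where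
  "ubar \<zeta> d u i j = (\<zeta> powi (d i * (d j - d i))) *\<^sub>C adj (u i j)"

definition conj_mat :: "nat \<Rightarrow> (nat \<Rightarrow> nat \<Rightarrow> complex) \<Rightarrow> (nat \<Rightarrow> nat \<Rightarrow> complex)
    \<Rightarrow> (nat \<Rightarrow> nat \<Rightarrow> 'a::cstar_algebra) \<Rightarrow> nat \<Rightarrow> nat \<Rightarrow> 'a" where
  "conj_mat n F Finv M i j = (\<Sum>k=1..n. \<Sum>l=1..n. (F i k * Finv l j) *\<^sub>C M k l)"

definition UF_relations :: "nat \<Rightarrow> complex \<Rightarrow> (nat \<Rightarrow> int) \<Rightarrow> (nat \<Rightarrow> nat \<Rightarrow> complex)
    \<Rightarrow> (nat \<Rightarrow> nat \<Rightarrow> complex) \<Rightarrow> (nat \<Rightarrow> nat \<Rightarrow> 'a::cstar_algebra) \<Rightarrow> bool" where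
  "UF_relations n \<zeta> d F Finv v \<longleftrightarrow>
     unitary_mat n v \<and> unitary_mat n (conj_mat n F Finv (ubar \<zeta> d v))"

inductive_set star_alg_gen :: "'a::cstar_algebra set \<Rightarrow> 'a set" for S where
  gen: "x \<in> S \<Longrightarrow> x \<in> star_alg_gen S"
| one: "1 \<in> star_alg_gen S"
| add: "x \<in> star_alg_gen S \<Longrightarrow> y \<in> star_alg_gen S \<Longrightarrow> x + y \<in> star_alg_gen S"
| mult: "x \<in> star_alg_gen S \<Longrightarrow> y \<in> star_alg_gen S \<Longrightarrow> x * y \<in> star_alg_gen S"
| scale: "x \<in> star_alg_gen S \<Longrightarrow> c *\<^sub>C x \<in> star_alg_gen S"
| adj: "x \<in> star_alg_gen S \<Longrightarrow> adj x \<in> star_alg_gen S"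

text \<open>The C*-algebra (all of type 'a) is the universal unital C*-algebra \<open>C(U^+_\<zeta>(F))\<close>
  with generators u: it is generated as a C*-algebra by the u_ij, these satisfy the relations,
  and every family satisfying the relations in a C*-algebra (of the same type) is the image of
  the u_ij under a unital *-homomorphism.\<close>
definition is_C_UplusF :: "nat \<Rightarrow> complex \<Rightarrow> (nat \<Rightarrow> int) \<Rightarrow> (nat \<Rightarrow> nat \<Rightarrow> complex)
    \<Rightarrow> (nat \<Rightarrow> nat \<Rightarrow> complex) \<Rightarrow> (nat \<Rightarrow> nat \<Rightarrow> 'a::cstar_algebra) \<Rightarrow> bool" where
  "is_C_UplusF n \<zeta> d F Finv u \<longleftrightarrow>
     closure (star_alg_gen {u i j | i j. i \<in> {1..n} \<and> j \<in> {1..n}}) = UNIV \<and>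
     UF_relations n \<zeta> d F Finv u \<and>
     (\<forall>v::nat \<Rightarrow> nat \<Rightarrow> 'a. UF_relations n \<zeta> d F Finv v \<longrightarrow>
        (\<exists>\<phi>. unital_star_hom \<phi> \<and> (\<forall>i\<in>{1..n}. \<forall>j\<in>{1..n}. \<phi> (u i j) = v i j)))"

definition circle :: "complex set" where "circle = {z. cmod z = 1}"

text \<open>A unital *-homomorphism \<open>\<rho> : A \<rightarrow> C(\<bbbT>, A)\<close>, written \<open>\<rho> a z = \<rho>_z(a)\<close>:
  the operations of \<open>C(\<bbbT>,A)\<close> are pointwise, so this means every \<open>\<rho>_z\<close> is a unital
  *-homomorphism and every \<open>\<rho>(a)\<close> is continuous on the circle.\<close>
definition hom_into_CT :: "('a::cstar_algebra \<Rightarrow> complex \<Rightarrow> 'a) \<Rightarrow> bool" where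
  "hom_into_CT \<rho> \<longleftrightarrow>
     (\<forall>z\<in>circle. unital_star_hom (\<lambda>a. \<rho> a z)) \<and> (\<forall>a. continuous_on circle (\<rho> a))"

end

theory Submission
  imports Defs "HOL-Computational_Algebra.Formal_Power_Series"
begin


lemma cs_scaleC_zero_left [simp]: "0 *\<^sub>C x = 0"
  using scaleC_add_left[of 0 0 x] by simp

lemma cs_scaleC_zero_right [simp]: "c *\<^sub>C 0 = 0"
  using scaleC_add_right[of c 0 0] by simp

lemma cs_scaleC_minus_left: "(- c) *\<^sub>C x = - (c *\<^sub>C x)"
  using scaleC_add_left[of c "-c" x] by (simp add: eq_neg_iff_add_eq_0 add.commute)

lemma cs_scaleC_minus_right: "c *\<^sub>C (- x) = - (c *\<^sub>C x)"
  using scaleC_add_right[of c x "-x"] by (simp add: eq_neg_iff_add_eq_0 add.commute)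

lemma cs_scaleC_diff_left: "(a - b) *\<^sub>C x = a *\<^sub>C x - b *\<^sub>C x"
  using scaleC_add_left[of a "-b" x] by (simp add: cs_scaleC_minus_left)

lemma cs_scaleC_diff_right: "c *\<^sub>C (x - y) = c *\<^sub>C x - c *\<^sub>C y"
  using scaleC_add_right[of c x "-y"] by (simp add: cs_scaleC_minus_right)

lemma cs_scaleC_sum_right: "c *\<^sub>C (\<Sum>k\<in>A. f k) = (\<Sum>k\<in>A. c *\<^sub>C f k)"
  by (induction A rule: infinite_finite_induct) (auto simp: scaleC_add_right)

lemma cs_scaleC_sum_left: "(\<Sum>k\<in>A. f k) *\<^sub>C x = (\<Sum>k\<in>A. f k *\<^sub>C x)"
  by (induction A rule: infinite_finite_induct) (auto simp: scaleC_add_left)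

lemma cs_scaleC_of_real: "complex_of_real r *\<^sub>C x = r *\<^sub>R x"
  by (simp add: scaleR_scaleC)

lemma cs_adj_zero [simp]: "adj 0 = 0"
  using adj_add[of 0 0] by simp

lemma cs_adj_one [simp]: "adj 1 = (1::'a::cstar_algebra)"
proof -
  have "adj 1 = adj 1 * adj (adj (1::'a))" by (simp only: adj_adj mult_1_right)
  also have "\<dots> = adj (adj 1 * 1)" by (simp only: adj_mult)
  also have "\<dots> = 1" by (simp add: adj_adj)
  finally show ?thesis .
qed

lemma cs_adj_minus: "adj (- x) = - adj x"
  using adj_add[of x "-x"] by (simp add: eq_neg_iff_add_eq_0 add.commute)

lemma cs_adj_diff: "adj (x - y) = adj x - adj y"
  using adj_add[of x "-y"] by (simp add: cs_adj_minus)

lemma cs_adj_scaleR: "adj (r *\<^sub>R x) = r *\<^sub>R adj x"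
  by (simp add: scaleR_scaleC adj_scaleC)

lemma cs_adj_power: "adj (x ^ k) = adj x ^ k"
  by (induction k) (simp_all add: adj_mult power_commutes)

lemma cs_norm_adj_le: "norm x \<le> norm (adj x)"
proof (cases "x = 0")
  case False
  have "norm x * norm x \<le> norm (adj x) * norm x"
    using cstar_identity[of x] norm_mult_ineq[of "adj x" x] by simp
  then show ?thesis using False by simp
qed simp

lemma cs_norm_adj [simp]: "norm (adj x) = norm x"
  using cs_norm_adj_le[of x] cs_norm_adj_le[of "adj x"] by (simp add: adj_adj)

lemma cs_adj_bounded_linear: "bounded_linear (adj :: 'a::cstar_algebra \<Rightarrow> 'a)"
  by (rule bounded_linear_intro[where K=1]) (auto simp: adj_add cs_adj_scaleR)

lemma cs_norm_scaleC_le: "norm (c *\<^sub>C x) \<le> norm c * norm x"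
  by (simp add: norm_scaleC)

lemma cs_scaleC_bounded_bilinear: "bounded_bilinear (scaleC :: complex \<Rightarrow> 'a::cstar_algebra \<Rightarrow> 'a)"
proof
  show "\<And>a a' b. (a + a') *\<^sub>C b = a *\<^sub>C b + a' *\<^sub>C b" by (rule scaleC_add_left)
  show "\<And>a b b'. a *\<^sub>C (b + b') = a *\<^sub>C b + a *\<^sub>C b'" by (rule scaleC_add_right)
  show "\<And>r a b. (r *\<^sub>R a) *\<^sub>C b = r *\<^sub>R (a *\<^sub>C b)"
    by (simp add: scaleR_scaleC scaleC_scaleC scaleR_conv_of_real)
  show "\<And>a r b. a *\<^sub>C (r *\<^sub>R b) = r *\<^sub>R (a *\<^sub>C b)"
    by (simp add: scaleR_scaleC scaleC_scaleC mult.commute)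
  show "\<exists>K. \<forall>a b. norm (a *\<^sub>C b) \<le> norm a * norm b * K"
    by (rule exI[of _ 1]) (simp add: norm_scaleC)
qed


lemma ush_add: "unital_star_hom \<phi> \<Longrightarrow> \<phi> (x + y) = \<phi> x + \<phi> y"
  and ush_scaleC: "unital_star_hom \<phi> \<Longrightarrow> \<phi> (c *\<^sub>C x) = c *\<^sub>C \<phi> x"
  and ush_mult: "unital_star_hom \<phi> \<Longrightarrow> \<phi> (x * y) = \<phi> x * \<phi> y"
  and ush_adj: "unital_star_hom \<phi> \<Longrightarrow> \<phi> (adj x) = adj (\<phi> x)"
  and ush_one: "unital_star_hom \<phi> \<Longrightarrow> \<phi> 1 = 1"
  by (simp_all add: unital_star_hom_def)

lemma ush_zero: "unital_star_hom \<phi> \<Longrightarrow> \<phi> 0 = 0"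
  using ush_add[of \<phi> 0 0] by simp

lemma ush_minus: "unital_star_hom \<phi> \<Longrightarrow> \<phi> (- x) = - \<phi> x"
  using ush_add[of \<phi> x "-x"] ush_zero[of \<phi>] by (simp add: eq_neg_iff_add_eq_0 add.commute)

lemma ush_diff: "unital_star_hom \<phi> \<Longrightarrow> \<phi> (x - y) = \<phi> x - \<phi> y"
  using ush_add[of \<phi> x "-y"] ush_minus[of \<phi> y] by simp

lemma ush_scaleR: "unital_star_hom \<phi> \<Longrightarrow> \<phi> (r *\<^sub>R x) = r *\<^sub>R \<phi> x"
  using ush_scaleC[of \<phi> "complex_of_real r" x] by (simp add: cs_scaleC_of_real)

lemma ush_sum: "unital_star_hom \<phi> \<Longrightarrow> \<phi> (\<Sum>k\<in>A. f k) = (\<Sum>k\<in>A. \<phi> (f k))"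
  by (induction A rule: infinite_finite_induct) (auto simp: ush_add ush_zero)

lemma ush_comp: "unital_star_hom \<phi> \<Longrightarrow> unital_star_hom \<psi> \<Longrightarrow> unital_star_hom (\<lambda>x. \<phi> (\<psi> x))"
  by (simp add: unital_star_hom_def)

lemma ush_id: "unital_star_hom (\<lambda>x. x)"
  by (simp add: unital_star_hom_def)

section \<open>Automatic contractivity\<close>

lemma cs_unitary_trick:
  fixes a b :: "'a::cstar_algebra"
  assumes ab: "a * a + b * b = 1" and sa: "adj a = a" and sb: "adj b = b" and comm: "a * b = b * a"
  shows "norm a \<le> 1"
proof -
  define c where "c = a + \<i> *\<^sub>C b"
  have adjc: "adj c = a + (- \<i>) *\<^sub>C b"
    by (simp add: c_def adj_add adj_scaleC sa sb)
  have "adj c * c = (a + (- \<i>) *\<^sub>C b) * (a + \<i> *\<^sub>C b)"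
    using adjc by (simp add: c_def)
  also have "\<dots> = a * a + a * (\<i> *\<^sub>C b) + ((- \<i>) *\<^sub>C b) * a + ((- \<i>) *\<^sub>C b) * (\<i> *\<^sub>C b)"
    by (simp only: distrib_left distrib_right add_ac)
  also have "\<dots> = a * a + \<i> *\<^sub>C (a * b) + (- \<i>) *\<^sub>C (b * a) + (\<i> * (- \<i>)) *\<^sub>C (b * b)"
    by (simp only: mult_scaleC_left mult_scaleC_right scaleC_scaleC)
  also have "\<dots> = a * a + b * b"
    by (simp add: comm cs_scaleC_minus_left scaleC_one)
  finally have "adj c * c = 1" using ab by simp
  then have "norm c * norm c = 1" using cstar_identity[of c] by simp
  then have "(norm c)\<^sup>2 = 1" by (simp add: power2_eq_square)
  then have nc: "norm c = 1"
    using norm_ge_zero[of c] power2_eq_1_iff[of "norm c"] by linarith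
  have "c + adj c = (a + \<i> *\<^sub>C b) + (a + (- \<i>) *\<^sub>C b)"
    using adjc by (simp add: c_def)
  also have "\<dots> = a + a + (\<i> *\<^sub>C b + (- \<i>) *\<^sub>C b)"
    by (simp only: add_ac)
  also have "\<dots> = a + a"
    by (simp add: cs_scaleC_minus_left)
  also have "\<dots> = 2 *\<^sub>R a" by (simp add: scaleR_2)
  finally have "c + adj c = 2 *\<^sub>R a" .
  then have "norm (2 *\<^sub>R a) \<le> norm c + norm (adj c)"
    by (metis norm_triangle_ineq)
  then show ?thesis using nc by simp
qed

lemma gchoose_half_bound: "\<bar>(1/2::real) gchoose k\<bar> \<le> 1"
proof (induction k)
  case 0
  then show ?case by simp
next
  case (Suc k)
  have e: "of_nat (Suc k) * ((1/2::real) gchoose (Suc k)) = (1/2 - of_nat k) * ((1/2) gchoose k)"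
    using gbinomial_mult_1[of "1/2::real" k] by (simp add: algebra_simps)
  have "\<bar>1/2 - real k\<bar> \<le> real (Suc k)" by simp
  then have "\<bar>(1/2 - real k) * ((1/2) gchoose k)\<bar> \<le> real (Suc k) * 1"
    unfolding abs_mult using Suc.IH by (intro mult_mono) auto
  then have "real (Suc k) * \<bar>(1/2::real) gchoose (Suc k)\<bar> \<le> real (Suc k) * 1"
    using e by (metis abs_mult abs_of_nat)
  then show ?case by (simp del: of_nat_Suc)
qed

lemma cs_sqrt_exists:
  fixes h :: "'a::cstar_algebra"
  assumes sa: "adj h = h" and nh: "norm h < 1"
  shows "\<exists>y. adj y = y \<and> y * h = h * y \<and> h * h + y * y = 1"
proof -
  define s where "s = h * h"
  have ns: "norm s < 1"
    using norm_mult_ineq[of h h] nh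
    by (simp add: s_def) (smt (verit) mult_le_one mult_strict_mono norm_ge_zero)
  define c :: "nat \<Rightarrow> real" where "c k = (-1)^k * ((1/2::real) gchoose k)" for k
  have cb: "\<bar>c k\<bar> \<le> 1" for k
    by (simp add: c_def abs_mult gchoose_half_bound)
  define t where "t k = c k *\<^sub>R s ^ k" for k
  have nt: "norm (t k) \<le> norm s ^ k" for k
  proof -
    have "norm (t k) = \<bar>c k\<bar> * norm (s ^ k)" by (simp add: t_def)
    also have "\<dots> \<le> 1 * norm s ^ k"
      using cb[of k] norm_power_ineq[of s k] by (intro mult_mono) auto
    finally show ?thesis by simp
  qed
  have sumn: "summable (\<lambda>k. norm (t k))"
    by (rule summable_comparison_test[where g="\<lambda>k. norm s ^ k"])
       (use nt ns in \<open>auto intro!: summable_geometric\<close>)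
  then have sumt: "summable t" by (rule summable_norm_cancel)
  define y where "y = suminf t"
  have prod: "t i * t (k - i) = (c i * c (k - i)) *\<^sub>R s ^ k" if "i \<le> k" for i k
    using that by (simp add: t_def power_add[symmetric])
  have conv: "(\<Sum>i\<le>k. c i * c (k - i)) = (-1)^k * ((1::real) gchoose k)" for k
  proof -
    have "(\<Sum>i\<le>k. c i * c (k - i)) = (\<Sum>i\<in>{0..k}. (-1)^k * (((1/2::real) gchoose i) * ((1/2) gchoose (k - i))))"
    proof (rule sum.cong)
      fix i assume "i \<in> {0..k}"
      then have "(-1::real)^i * (-1)^(k-i) = (-1)^k" by (simp add: power_add[symmetric])
      then show "c i * c (k - i) = (-1)^k * (((1/2::real) gchoose i) * ((1/2) gchoose (k - i)))"
        unfolding c_def by (metis (no_types, lifting) mult.assoc mult.left_commute)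
    qed (auto simp: atLeast0AtMost)
    also have "\<dots> = (-1)^k * ((1/2 + 1/2::real) gchoose k)"
      by (simp add: sum_distrib_left[symmetric] gbinomial_Vandermonde)
    finally show ?thesis by simp
  qed
  have cp: "(\<lambda>k. \<Sum>i\<le>k. t i * t (k - i)) sums (y * y)"
    unfolding y_def by (rule Cauchy_product_sums[OF sumn sumn])
  have terms: "(\<Sum>i\<le>k. t i * t (k - i)) = (if k = 0 then 1 else if k = 1 then - s else 0)" for k
  proof -
    have "(\<Sum>i\<le>k. t i * t (k - i)) = (\<Sum>i\<le>k. (c i * c (k - i)) *\<^sub>R s ^ k)"
      by (rule sum.cong) (auto simp: prod)
    also have "\<dots> = ((-1)^k * ((1::real) gchoose k)) *\<^sub>R s ^ k"
      by (simp add: scaleR_sum_left[symmetric] conv)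
    also have "\<dots> = (if k = 0 then 1 else if k = 1 then - s else 0)"
    proof -
      have "(1::real) gchoose k = of_nat (1 choose k)"
        using binomial_gbinomial[of 1 k, where 'a=real] by simp
      moreover have "k \<ge> 2 \<Longrightarrow> (1::nat) choose k = 0" by (simp add: binomial_eq_0)
      ultimately show ?thesis
        by (cases "k = 0"; cases "k = 1") auto
    qed
    finally show ?thesis .
  qed
  have "(\<lambda>k. (if k = 0 then 1 else if k = 1 then - s else 0)) sums (\<Sum>k\<in>{0,1::nat}. (if k = 0 then 1 else if k = 1 then - s else 0))"
    by (rule sums_finite) auto
  then have "(\<lambda>k. \<Sum>i\<le>k. t i * t (k - i)) sums (1 - s)"
    unfolding terms by simp
  then have yy: "y * y = 1 - s" using cp sums_unique2 by blast
  have adjt: "adj (t k) = t k" for k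
    by (simp add: t_def cs_adj_scaleR cs_adj_power s_def adj_mult sa)
  have ya: "adj y = y"
    unfolding y_def using bounded_linear.suminf[OF cs_adj_bounded_linear sumt] adjt by simp
  have sh: "s * h = h * s" by (simp add: s_def mult.assoc)
  have th: "t k * h = h * t k" for k
    by (simp add: t_def power_commuting_commutes[OF sh])
  have "y * h = (\<Sum>k. t k * h)" unfolding y_def by (rule suminf_mult2[OF sumt])
  also have "\<dots> = (\<Sum>k. h * t k)" by (simp add: th)
  also have "\<dots> = h * y" unfolding y_def by (rule suminf_mult[OF sumt])
  finally have yh: "y * h = h * y" .
  show ?thesis using ya yh yy by (intro exI[of _ y]) (simp add: s_def)
qed

lemma ush_norm_sa_lt1:
  assumes hom: "unital_star_hom \<phi>" and sa: "adj h = h" and nh: "norm (h::'a::cstar_algebra) < 1"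
  shows "norm (\<phi> h :: 'b::cstar_algebra) \<le> 1"
proof -
  obtain y where y: "adj y = y" "y * h = h * y" "h * h + y * y = 1"
    using cs_sqrt_exists[OF sa nh] by blast
  show ?thesis
  proof (rule cs_unitary_trick[where b="\<phi> y"])
    show "\<phi> h * \<phi> h + \<phi> y * \<phi> y = 1"
      using y(3) hom by (metis ush_add ush_mult ush_one)
    show "adj (\<phi> h) = \<phi> h" using hom sa by (metis ush_adj)
    show "adj (\<phi> y) = \<phi> y" using hom y(1) by (metis ush_adj)
    show "\<phi> h * \<phi> y = \<phi> y * \<phi> h" using hom y(2) by (metis ush_mult)
  qed
qed

lemma ush_norm_sa:
  assumes hom: "unital_star_hom \<phi>" and sa: "adj h = h"
  shows "norm (\<phi> h :: 'b::cstar_algebra) \<le> norm (h::'a::cstar_algebra)"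
proof (rule dense_ge)
  fix t :: real
  assume t: "norm h < t"
  then have tp: "t > 0" using norm_ge_zero[of h] by linarith
  have "norm (\<phi> ((1/t) *\<^sub>R h)) \<le> 1"
    using tp t by (intro ush_norm_sa_lt1[OF hom]) (simp_all add: cs_adj_scaleR sa)
  then have "(1/t) * norm (\<phi> h) \<le> 1"
    using tp by (simp add: ush_scaleR[OF hom])
  then show "norm (\<phi> h) \<le> t" using tp by (simp add: field_simps)
qed


lemma ush_norm_le:
  assumes hom: "unital_star_hom \<phi>"
  shows "norm (\<phi> x :: 'b::cstar_algebra) \<le> norm (x::'a::cstar_algebra)"
proof -
  have sa: "adj (adj x * x) = adj x * x" by (simp add: adj_mult adj_adj)
  have "norm (\<phi> x) * norm (\<phi> x) = norm (adj (\<phi> x) * \<phi> x)" by (simp add: cstar_identity)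
  also have "\<dots> = norm (\<phi> (adj x * x))" using hom by (simp add: ush_mult ush_adj)
  also have "\<dots> \<le> norm (adj x * x)" by (rule ush_norm_sa[OF hom sa])
  also have "\<dots> = norm x * norm x" by (simp add: cstar_identity)
  finally have "(norm (\<phi> x))\<^sup>2 \<le> (norm x)\<^sup>2" by (simp add: power2_eq_square)
  then show ?thesis by (rule power2_le_imp_le) simp
qed

lemma ush_bounded_linear:
  assumes hom: "unital_star_hom (\<phi> :: 'a::cstar_algebra \<Rightarrow> 'b::cstar_algebra)"
  shows "bounded_linear \<phi>"
  by (rule bounded_linear_intro[where K=1]) (use hom in \<open>auto simp: ush_add ush_scaleR ush_norm_le\<close>)

lemma ush_continuous:
  assumes hom: "unital_star_hom (\<phi> :: 'a::cstar_algebra \<Rightarrow> 'b::cstar_algebra)"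
  shows "continuous_on S \<phi>"
  using bounded_linear.continuous_on[OF ush_bounded_linear[OF hom] continuous_on_id] by simp

lemma ush_agree:
  fixes \<phi> \<psi> :: "'a::cstar_algebra \<Rightarrow> 'b::cstar_algebra"
  assumes h1: "unital_star_hom \<phi>" and h2: "unital_star_hom \<psi>"
    and dense: "closure (star_alg_gen G) = UNIV" and eq: "\<forall>x\<in>G. \<phi> x = \<psi> x"
  shows "\<phi> a = \<psi> a"
proof -
  have "\<phi> x = \<psi> x" if "x \<in> star_alg_gen G" for x
    using that
  proof (induction rule: star_alg_gen.induct)
    case (gen x) then show ?case using eq by blast
  next
    case one then show ?case using h1 h2 by (simp add: ush_one)
  next
    case (add x y) then show ?case using h1 h2 by (simp add: ush_add)
  next
    case (mult x y) then show ?case using h1 h2 by (simp add: ush_mult)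
  next
    case (scale x c) then show ?case using h1 h2 by (simp add: ush_scaleC)
  next
    case (adj x) then show ?case using h1 h2 by (simp add: ush_adj)
  qed
  then have "star_alg_gen G \<subseteq> {x. \<phi> x = \<psi> x}" by blast
  moreover have "closed {x. \<phi> x = \<psi> x}"
    by (rule closed_Collect_eq) (simp_all add: ush_continuous h1 h2)
  ultimately have "closure (star_alg_gen G) \<subseteq> {x. \<phi> x = \<psi> x}"
    by (rule closure_minimal)
  then show ?thesis using dense by auto
qed

section \<open>Twisting\<close>

definition tw :: "complex \<Rightarrow> (nat \<Rightarrow> int) \<Rightarrow> (nat \<Rightarrow> nat \<Rightarrow> 'a::cstar_algebra) \<Rightarrow> nat \<Rightarrow> nat \<Rightarrow> 'a" where
  "tw z e M i j = (z powi (e j - e i)) *\<^sub>C M i j"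

lemma circle_nz: "z \<in> circle \<Longrightarrow> z \<noteq> 0"
  by (auto simp: circle_def)

lemma circle_cnj_inv: "z \<in> circle \<Longrightarrow> cnj z = inverse z"
proof -
  assume z: "z \<in> circle"
  have "z * cnj z = 1" using complex_norm_square[of z] z by (simp add: circle_def)
  then show ?thesis using circle_nz[OF z] by (simp add: field_simps)
qed

lemma circle_mult_cnj: "z \<in> circle \<Longrightarrow> z * cnj z = 1"
  using complex_norm_square[of z] by (simp add: circle_def)

lemma circle_cnj: "z \<in> circle \<Longrightarrow> cnj z \<in> circle"
  by (simp add: circle_def)

lemma circle_mult: "s \<in> circle \<Longrightarrow> t \<in> circle \<Longrightarrow> s * t \<in> circle"
  by (simp add: circle_def norm_mult)

lemma cnj_powi_circle: "z \<in> circle \<Longrightarrow> cnj (z powi m) = z powi (- m)"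
  by (simp add: circle_cnj_inv power_int_inverse power_int_minus)

lemma cnj_powi_circle2: "z \<in> circle \<Longrightarrow> cnj z powi m = z powi (- m)"
  by (simp add: circle_cnj_inv power_int_inverse power_int_minus)

lemma powi_mult_circle: "z \<in> circle \<Longrightarrow> z powi a * z powi b = z powi (a + b)"
  by (simp add: power_int_add circle_nz)

lemma unitary_cong:
  assumes "\<And>i j. i \<in> {1..n} \<Longrightarrow> j \<in> {1..n} \<Longrightarrow> M i j = M' i j"
  shows "unitary_mat n M = unitary_mat n M'"
proof -
  have "\<forall>i\<in>{1..n}. \<forall>j\<in>{1..n}.
      (\<Sum>k=1..n. adj (M k i) * M k j) = (\<Sum>k=1..n. adj (M' k i) * M' k j) \<and>
      (\<Sum>k=1..n. M i k * adj (M j k)) = (\<Sum>k=1..n. M' i k * adj (M' j k))"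
    using assms by (auto intro!: sum.cong)
  then show ?thesis unfolding unitary_mat_def by auto
qed

lemma unitary_twist:
  assumes z: "z \<in> circle" and U: "unitary_mat n M"
  shows "unitary_mat n (tw z e M)"
  unfolding unitary_mat_def
proof (intro ballI conjI)
  fix i j assume i: "i \<in> {1..n}" and j: "j \<in> {1..n}"
  have "(\<Sum>k=1..n. adj (tw z e M k i) * tw z e M k j)
      = (\<Sum>k=1..n. z powi (e j - e i) *\<^sub>C (adj (M k i) * M k j))"
  proof (rule sum.cong)
    fix k
    have "adj (tw z e M k i) * tw z e M k j
        = (z powi (- (e i - e k)) * z powi (e j - e k)) *\<^sub>C (adj (M k i) * M k j)"
      by (simp add: tw_def adj_scaleC cnj_powi_circle2[OF z] mult_scaleC_left mult_scaleC_right
          scaleC_scaleC mult_ac)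
    also have "\<dots> = z powi (e j - e i) *\<^sub>C (adj (M k i) * M k j)"
      by (simp add: powi_mult_circle[OF z])
    finally show "adj (tw z e M k i) * tw z e M k j = z powi (e j - e i) *\<^sub>C (adj (M k i) * M k j)" .
  qed simp
  also have "\<dots> = z powi (e j - e i) *\<^sub>C (if i = j then 1 else 0)"
    using U i j by (simp add: cs_scaleC_sum_right[symmetric] unitary_mat_def)
  also have "\<dots> = (if i = j then 1 else 0)" by (simp add: scaleC_one)
  finally show "(\<Sum>k=1..n. adj (tw z e M k i) * tw z e M k j) = (if i = j then 1 else 0)" .
next
  fix i j assume i: "i \<in> {1..n}" and j: "j \<in> {1..n}"
  have "(\<Sum>k=1..n. tw z e M i k * adj (tw z e M j k))
      = (\<Sum>k=1..n. z powi (e j - e i) *\<^sub>C (M i k * adj (M j k)))"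
  proof (rule sum.cong)
    fix k
    have "tw z e M i k * adj (tw z e M j k)
        = (z powi (e k - e i) * z powi (- (e k - e j))) *\<^sub>C (M i k * adj (M j k))"
      by (simp add: tw_def adj_scaleC cnj_powi_circle2[OF z] mult_scaleC_left mult_scaleC_right
          scaleC_scaleC mult_ac)
    also have "\<dots> = z powi (e j - e i) *\<^sub>C (M i k * adj (M j k))"
      by (simp add: powi_mult_circle[OF z])
    finally show "tw z e M i k * adj (tw z e M j k) = z powi (e j - e i) *\<^sub>C (M i k * adj (M j k))" .
  qed simp
  also have "\<dots> = z powi (e j - e i) *\<^sub>C (if i = j then 1 else 0)"
    using U i j by (simp add: cs_scaleC_sum_right[symmetric] unitary_mat_def)
  also have "\<dots> = (if i = j then 1 else 0)" by (simp add: scaleC_one)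
  finally show "(\<Sum>k=1..n. tw z e M i k * adj (tw z e M j k)) = (if i = j then 1 else 0)" .
qed

lemma conj_twist:
  assumes z: "z \<in> circle" and adm: "admissible n F Finv d d' dd"
    and i: "i \<in> {1..n}" and j: "j \<in> {1..n}"
  shows "conj_mat n F Finv (ubar \<zeta> d (tw z d u)) i j = tw z d' (conj_mat n F Finv (ubar \<zeta> d u)) i j"
proof -
  have "conj_mat n F Finv (ubar \<zeta> d (tw z d u)) i j =
     (\<Sum>k=1..n. \<Sum>l=1..n. z powi (d' j - d' i) *\<^sub>C ((F i k * Finv l j) *\<^sub>C ubar \<zeta> d u k l))"
    unfolding conj_mat_def
  proof (intro sum.cong refl)
    fix k l assume k: "k \<in> {1..n}" and l: "l \<in> {1..n}"
    show "(F i k * Finv l j) *\<^sub>C ubar \<zeta> d (tw z d u) k l =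
          z powi (d' j - d' i) *\<^sub>C ((F i k * Finv l j) *\<^sub>C ubar \<zeta> d u k l)"
    proof (cases "F i k = 0 \<or> Finv l j = 0")
      case True
      then show ?thesis by auto
    next
      case False
      then have "d' i = dd - d k" "d' j = dd - d l"
        using adm i j k l unfolding admissible_def by force+
      then have ex: "d k - d l = d' j - d' i" by simp
      show ?thesis
        by (simp add: ubar_def tw_def adj_scaleC cnj_powi_circle2[OF z] scaleC_scaleC ex mult_ac)
    qed
  qed
  also have "\<dots> = tw z d' (conj_mat n F Finv (ubar \<zeta> d u)) i j"
    by (simp add: tw_def conj_mat_def cs_scaleC_sum_right)
  finally show ?thesis .
qed

lemma rel_twist:
  assumes z: "z \<in> circle" and adm: "admissible n F Finv d d' dd"
    and R: "UF_relations n \<zeta> d F Finv u"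
  shows "UF_relations n \<zeta> d F Finv (tw z d u)"
proof -
  have "unitary_mat n (tw z d u)" using R unitary_twist[OF z] unfolding UF_relations_def by blast
  moreover have "unitary_mat n (conj_mat n F Finv (ubar \<zeta> d (tw z d u)))"
  proof -
    have "unitary_mat n (tw z d' (conj_mat n F Finv (ubar \<zeta> d u)))"
      using R unitary_twist[OF z] unfolding UF_relations_def by blast
    then show ?thesis
      using unitary_cong[of n "conj_mat n F Finv (ubar \<zeta> d (tw z d u))"
          "tw z d' (conj_mat n F Finv (ubar \<zeta> d u))"] conj_twist[OF z adm] by blast
  qed
  ultimately show ?thesis by (simp add: UF_relations_def)
qed


theorem proposition2p17:
  fixes n :: nat and \<zeta> :: complex
    and F Finv :: "nat \<Rightarrow> nat \<Rightarrow> complex"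
    and d d' :: "nat \<Rightarrow> int" and dd :: int
    and u :: "nat \<Rightarrow> nat \<Rightarrow> 'a::cstar_algebra"
  assumes zeta: "\<zeta> \<in> circle"
    and inv: "inverse_cmat n F Finv"
    and adm: "admissible n F Finv d d' dd"
    and C: "is_C_UplusF n \<zeta> d F Finv u"
  shows "\<exists>\<rho>::'a \<Rightarrow> complex \<Rightarrow> 'a.
     \<comment> \<open>existence\<close>
     hom_into_CT \<rho> \<and>
     (\<forall>i\<in>{1..n}. \<forall>j\<in>{1..n}. \<forall>z\<in>circle. \<rho> (u i j) z = (z powi (d j - d i)) *\<^sub>C u i j) \<and>
     \<comment> \<open>uniqueness (as elements of C(T,A))\<close>
     (\<forall>\<rho>'::'a \<Rightarrow> complex \<Rightarrow> 'a. hom_into_CT \<rho>' \<and>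
        (\<forall>i\<in>{1..n}. \<forall>j\<in>{1..n}. \<forall>z\<in>circle. \<rho>' (u i j) z = (z powi (d j - d i)) *\<^sub>C u i j)
        \<longrightarrow> (\<forall>a. \<forall>z\<in>circle. \<rho>' a z = \<rho> a z)) \<and>
     \<comment> \<open>coaction identity (\<rho>\<otimes>id)\<rho> = (id\<otimes>\<Delta>)\<rho>\<close>
     (\<forall>a. \<forall>s\<in>circle. \<forall>t\<in>circle. \<rho> (\<rho> a t) s = \<rho> a (s * t)) \<and>
     \<comment> \<open>density: closed linear span of \<rho>(A)(1\<otimes>C(T)) is all of C(T,A)\<close>
     (\<forall>f::complex \<Rightarrow> 'a. continuous_on circle f \<longrightarrow>
        (\<forall>\<epsilon>>0. \<exists>(m::nat) (g::nat \<Rightarrow> complex \<Rightarrow> complex) (a::nat \<Rightarrow> 'a).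
           (\<forall>k<m. continuous_on circle (g k)) \<and>
           (\<forall>z\<in>circle. norm (f z - (\<Sum>k<m. g k z *\<^sub>C \<rho> (a k) z)) < \<epsilon>)))"
proof -
  define G where "G = {u i j |i j. i \<in> {1..n} \<and> j \<in> {1..n}}"
  have dense: "closure (star_alg_gen G) = UNIV"
    and rel: "UF_relations n \<zeta> d F Finv u"
    and univ: "\<And>v::nat \<Rightarrow> nat \<Rightarrow> 'a. UF_relations n \<zeta> d F Finv v \<Longrightarrow>
        \<exists>\<phi>. unital_star_hom \<phi> \<and> (\<forall>i\<in>{1..n}. \<forall>j\<in>{1..n}. \<phi> (u i j) = v i j)"
    using C unfolding is_C_UplusF_def G_def by blast+
  have agree: "\<phi> a = \<psi> a" if "unital_star_hom \<phi>" "unital_star_hom \<psi>"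
    "\<forall>i\<in>{1..n}. \<forall>j\<in>{1..n}. \<phi> (u i j) = \<psi> (u i j)" for \<phi> \<psi> :: "'a \<Rightarrow> 'a" and a
    by (rule ush_agree[OF that(1,2) dense]) (use that(3) in \<open>auto simp: G_def\<close>)
  define \<Phi> where "\<Phi> z = (SOME \<phi>. unital_star_hom \<phi> \<and>
      (\<forall>i\<in>{1..n}. \<forall>j\<in>{1..n}. \<phi> (u i j) = tw z d u i j))" for z
  have \<Phi>: "unital_star_hom (\<Phi> z) \<and> (\<forall>i\<in>{1..n}. \<forall>j\<in>{1..n}. \<Phi> z (u i j) = tw z d u i j)"
    if z: "z \<in> circle" for z
    unfolding \<Phi>_def using someI_ex[OF univ[OF rel_twist[OF z adm rel]]] by simp
  have hom: "unital_star_hom (\<Phi> z)" if "z \<in> circle" for z using \<Phi>[OF that] by blast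
  have gens: "\<Phi> z (u i j) = (z powi (d j - d i)) *\<^sub>C u i j"
    if "z \<in> circle" "i \<in> {1..n}" "j \<in> {1..n}" for z i j
    using \<Phi>[OF that(1)] that(2,3) by (simp add: tw_def)
  have nb: "norm (\<Phi> z x) \<le> norm x" if "z \<in> circle" for z x
    by (rule ush_norm_le[OF hom[OF that]])
  have contS: "continuous_on circle (\<lambda>z. \<Phi> z x)" if "x \<in> star_alg_gen G" for x
    using that
  proof (induction rule: star_alg_gen.induct)
    case (gen x)
    then obtain i j where ij: "i \<in> {1..n}" "j \<in> {1..n}" "x = u i j" by (auto simp: G_def)
    have "continuous_on circle (\<lambda>z. (z powi (d j - d i)) *\<^sub>C u i j)"
    proof (rule bounded_bilinear.continuous_on[OF cs_scaleC_bounded_bilinear])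
      have c0: "\<forall>z\<in>circle. z \<noteq> 0" using circle_nz by blast
      show "continuous_on circle (\<lambda>z. z powi (d j - d i))"
        by (rule continuous_on_power_int[OF continuous_on_id]) (use c0 in blast)
    qed (rule continuous_on_const)
    then show ?case
      by (rule continuous_on_eq) (use ij gens in auto)
  next
    case one
    show ?case by (rule continuous_on_eq[OF continuous_on_const]) (simp add: hom ush_one)
  next
    case (add x y)
    show ?case by (rule continuous_on_eq[OF continuous_on_add[OF add.IH]]) (simp add: hom ush_add)
  next
    case (mult x y)
    show ?case by (rule continuous_on_eq[OF continuous_on_mult[OF mult.IH]]) (simp add: hom ush_mult)
  next
    case (scale x c)
    have "continuous_on circle (\<lambda>z. c *\<^sub>C \<Phi> z x)"
      by (rule bounded_bilinear.continuous_on[OF cs_scaleC_bounded_bilinear continuous_on_const scale.IH])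
    then show ?case by (rule continuous_on_eq) (simp add: hom ush_scaleC)
  next
    case (adj x)
    have "continuous_on circle (\<lambda>z. adj (\<Phi> z x))"
      by (rule bounded_linear.continuous_on[OF cs_adj_bounded_linear adj.IH])
    then show ?case by (rule continuous_on_eq) (simp add: hom ush_adj)
  qed
  have contA: "continuous_on circle (\<lambda>z. \<Phi> z a)" for a
    unfolding continuous_on_iff
  proof (intro ballI allI impI)
    fix w e assume w: "w \<in> circle" and e: "(0::real) < e"
    have e3: "e/3 > 0" using e by simp
    have "a \<in> closure (star_alg_gen G)" using dense by simp
    then obtain b where b: "b \<in> star_alg_gen G" "dist b a < e/3"
      using e3 unfolding closure_approachable by blast
    have "\<forall>x\<in>circle. \<forall>e>0. \<exists>d>0. \<forall>x'\<in>circle. dist x' x < d \<longrightarrow> dist (\<Phi> x' b) (\<Phi> x b) < e"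
      using contS[OF b(1)] unfolding continuous_on_iff .
    from this[rule_format, OF w e3] obtain \<delta> where \<delta>: "\<delta> > 0"
      "\<forall>z\<in>circle. dist z w < \<delta> \<longrightarrow> dist (\<Phi> z b) (\<Phi> w b) < e/3"
      by blast
    show "\<exists>\<delta>>0. \<forall>z\<in>circle. dist z w < \<delta> \<longrightarrow> dist (\<Phi> z a) (\<Phi> w a) < e"
    proof (intro exI[of _ \<delta>] conjI ballI impI)
      fix z assume z: "z \<in> circle" and dz: "dist z w < \<delta>"
      have "dist (\<Phi> z a) (\<Phi> z b) = norm (\<Phi> z (a - b))"
        by (simp only: dist_norm ush_diff[OF hom[OF z]])
      also have "\<dots> \<le> norm (a - b)" by (rule nb[OF z])
      also have "\<dots> = dist b a" by (simp only: dist_norm norm_minus_commute)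
      finally have 1: "dist (\<Phi> z a) (\<Phi> z b) < e/3" using b(2) by linarith
      have "dist (\<Phi> w b) (\<Phi> w a) = norm (\<Phi> w (b - a))"
        by (simp only: dist_norm ush_diff[OF hom[OF w]])
      also have "\<dots> \<le> norm (b - a)" by (rule nb[OF w])
      also have "\<dots> = dist b a" by (simp only: dist_norm)
      finally have 3: "dist (\<Phi> w b) (\<Phi> w a) < e/3" using b(2) by linarith
      have 2: "dist (\<Phi> z b) (\<Phi> w b) < e/3" using \<delta>(2) z dz by blast
      have "dist (\<Phi> z a) (\<Phi> w a) \<le> dist (\<Phi> z a) (\<Phi> z b) + dist (\<Phi> z b) (\<Phi> w a)"
        by (rule dist_triangle)
      moreover have "dist (\<Phi> z b) (\<Phi> w a) \<le> dist (\<Phi> z b) (\<Phi> w b) + dist (\<Phi> w b) (\<Phi> w a)"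
        by (rule dist_triangle)
      ultimately show "dist (\<Phi> z a) (\<Phi> w a) < e" using 1 2 3 by linarith
    qed (rule \<delta>(1))
  qed
  have coact: "\<Phi> s (\<Phi> t a) = \<Phi> (s * t) a" if s: "s \<in> circle" and t: "t \<in> circle" for s t a
  proof (rule agree[where \<phi>="\<lambda>a. \<Phi> s (\<Phi> t a)" and \<psi>="\<Phi> (s * t)"])
    show "unital_star_hom (\<lambda>a. \<Phi> s (\<Phi> t a))" by (rule ush_comp[OF hom[OF s] hom[OF t]])
    show "unital_star_hom (\<Phi> (s * t))" by (rule hom[OF circle_mult[OF s t]])
    show "\<forall>i\<in>{1..n}. \<forall>j\<in>{1..n}. \<Phi> s (\<Phi> t (u i j)) = \<Phi> (s * t) (u i j)"
      using s t circle_mult[OF s t]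
      by (simp add: gens ush_scaleC hom scaleC_scaleC power_int_mult_distrib mult.commute)
  qed
  have \<Phi>1: "\<Phi> 1 a = a" for a
  proof -
    have c1: "(1::complex) \<in> circle" by (simp add: circle_def)
    show ?thesis
      by (rule agree[OF hom[OF c1] ush_id]) (simp add: gens[OF c1] scaleC_one)
  qed
  define \<rho> where "\<rho> a z = \<Phi> z a" for a z
  show ?thesis
  proof (rule exI[of _ \<rho>], intro conjI allI impI ballI)
    show "hom_into_CT \<rho>"
      unfolding hom_into_CT_def \<rho>_def using hom contA by (simp add: eta_contract_eq)
  next
    fix i j z assume "i \<in> {1..n}" "j \<in> {1..n}" "z \<in> circle"
    then show "\<rho> (u i j) z = (z powi (d j - d i)) *\<^sub>C u i j" by (simp add: \<rho>_def gens)
  next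
    fix \<rho>' :: "'a \<Rightarrow> complex \<Rightarrow> 'a" and a z
    assume H: "hom_into_CT \<rho>' \<and>
        (\<forall>i\<in>{1..n}. \<forall>j\<in>{1..n}. \<forall>z\<in>circle. \<rho>' (u i j) z = (z powi (d j - d i)) *\<^sub>C u i j)"
      and z: "z \<in> circle"
    show "\<rho>' a z = \<rho> a z"
      unfolding \<rho>_def
    proof (rule agree[where \<phi>="\<lambda>a. \<rho>' a z" and \<psi>="\<Phi> z"])
      show "unital_star_hom (\<lambda>a. \<rho>' a z)" using H z by (simp add: hom_into_CT_def)
      show "unital_star_hom (\<Phi> z)" by (rule hom[OF z])
      show "\<forall>i\<in>{1..n}. \<forall>j\<in>{1..n}. \<rho>' (u i j) z = \<Phi> z (u i j)"
        using H z by (simp add: gens)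
    qed
  next
    fix a s t assume "s \<in> circle" "t \<in> circle"
    then show "\<rho> (\<rho> a t) s = \<rho> a (s * t)" by (simp add: \<rho>_def coact)
  next
    fix f :: "complex \<Rightarrow> 'a" and \<epsilon> :: real
    assume fc: "continuous_on circle f" and \<epsilon>: "\<epsilon> > 0"
    show "\<exists>(m::nat) (g::nat \<Rightarrow> complex \<Rightarrow> complex) (a::nat \<Rightarrow> 'a).
           (\<forall>k<m. continuous_on circle (g k)) \<and>
           (\<forall>z\<in>circle. norm (f z - (\<Sum>k<m. g k z *\<^sub>C \<rho> (a k) z)) < \<epsilon>)"
    proof -
    define Fz where "Fz z = \<Phi> (cnj z) (f z)" for z
    have Finv: "\<Phi> z (Fz z) = f z" if z: "z \<in> circle" for z
      using coact[OF z circle_cnj[OF z]] circle_mult_cnj[OF z] \<Phi>1 by (simp add: Fz_def)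
    have Fc: "continuous_on circle Fz"
      unfolding continuous_on_def
    proof
      fix w assume w: "w \<in> circle"
      have ev: "eventually (\<lambda>z. z \<in> circle) (at w within circle)"
        by (simp add: eventually_at_filter)
      have f1: "((\<lambda>z. norm (f z - f w)) \<longlongrightarrow> 0) (at w within circle)"
        using fc w unfolding continuous_on_def
        by (intro tendsto_norm_zero) (simp add: LIM_zero)
      have t1: "((\<lambda>z. \<Phi> (cnj z) (f z - f w)) \<longlongrightarrow> 0) (at w within circle)"
        by (rule Lim_null_comparison[OF eventually_mono[OF ev] f1])
           (simp add: nb circle_cnj)
      have c2: "continuous_on circle (\<lambda>z. \<Phi> (cnj z) (f w))"
        by (rule continuous_on_compose2[OF contA[of "f w"] continuous_on_cnj[OF continuous_on_id]])
           (auto simp: circle_cnj)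
      have t2: "((\<lambda>z. \<Phi> (cnj z) (f w)) \<longlongrightarrow> \<Phi> (cnj w) (f w)) (at w within circle)"
        using c2 w unfolding continuous_on_def by blast
      have "((\<lambda>z. \<Phi> (cnj z) (f z - f w) + \<Phi> (cnj z) (f w)) \<longlongrightarrow> 0 + \<Phi> (cnj w) (f w)) (at w within circle)"
        by (rule tendsto_add[OF t1 t2])
      moreover have "eventually (\<lambda>z. \<Phi> (cnj z) (f z - f w) + \<Phi> (cnj z) (f w) = Fz z) (at w within circle)"
        by (rule eventually_mono[OF ev]) (simp add: Fz_def hom circle_cnj ush_diff)
      ultimately show "(Fz \<longlongrightarrow> Fz w) (at w within circle)"
        using tendsto_cong by (fastforce simp: Fz_def)
    qed
    have circ_sph: "circle = sphere 0 1" by (auto simp: circle_def)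
    have cpt: "compact circle" by (simp add: circ_sph)
    have "uniformly_continuous_on circle Fz" by (rule compact_uniformly_continuous[OF Fc cpt])
    then obtain \<delta> where \<delta>: "\<delta> > 0"
      "\<And>x x'. x \<in> circle \<Longrightarrow> x' \<in> circle \<Longrightarrow> dist x' x < \<delta> \<Longrightarrow> dist (Fz x') (Fz x) < \<epsilon>/2"
      unfolding uniformly_continuous_on_def using \<epsilon> by (meson half_gt_zero)
    have "circle \<subseteq> (\<Union>t\<in>circle. ball t \<delta>)" using \<delta>(1) by auto
    then obtain T where T: "T \<subseteq> circle" "finite T" "circle \<subseteq> (\<Union>t\<in>T. ball t \<delta>)"
      using compactE_image[OF cpt, of circle "\<lambda>t. ball t \<delta>"] by blast
    define hh where "hh (t::complex) (z::complex) = max 0 (\<delta> - dist z t)" for t z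
    define H where "H z = (\<Sum>t\<in>T. hh t z)" for z
    have hh0: "hh t z \<ge> 0" for t z by (simp add: hh_def)
    have Hpos: "H z > 0" if z: "z \<in> circle" for z
    proof -
      obtain t where t: "t \<in> T" "dist t z < \<delta>" using T(3) z by auto
      have "hh t z > 0" using t by (simp add: hh_def dist_commute)
      then show ?thesis unfolding H_def by (rule sum_pos2[OF T(2) t(1)]) (simp add: hh0)
    qed
    define p where "p t z = hh t z / H z" for t z
    have psum: "(\<Sum>t\<in>T. p t z) = 1" if "z \<in> circle" for z
      using Hpos[OF that] by (simp add: p_def H_def sum_divide_distrib[symmetric])
    have p0: "p t z \<ge> 0" if "z \<in> circle" for t z
      using Hpos[OF that] hh0 by (simp add: p_def)
    have c1: "continuous_on circle (hh t)" for t
      unfolding hh_def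
      by (intro continuous_on_max continuous_on_const continuous_on_diff continuous_on_dist continuous_on_id)
    have c2: "continuous_on circle H"
      unfolding H_def by (intro continuous_on_sum c1)
    have pc: "continuous_on circle (p t)" for t
      unfolding p_def
      by (rule continuous_on_divide[OF c1 c2]) (use Hpos in force)
    from ex_bij_betw_nat_finite[OF T(2)] obtain e where e: "bij_betw e {0..<card T} T" by (elim exE)
    define m where "m = card T"
    define g where "g k z = complex_of_real (p (e k) z)" for k z
    define a where "a k = Fz (e k)" for k
    show "\<exists>(m::nat) (g::nat \<Rightarrow> complex \<Rightarrow> complex) (a::nat \<Rightarrow> 'a).
           (\<forall>k<m. continuous_on circle (g k)) \<and>
           (\<forall>z\<in>circle. norm (f z - (\<Sum>k<m. g k z *\<^sub>C \<rho> (a k) z)) < \<epsilon>)"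
    proof (intro exI[of _ m] exI[of _ g] exI[of _ a] conjI allI impI ballI)
      fix k assume "k < m"
      show "continuous_on circle (g k)"
        unfolding g_def using pc[of "e k"] by simp
    next
      fix z assume z: "z \<in> circle"
      have "(\<Sum>k<m. g k z *\<^sub>C \<rho> (a k) z) = (\<Sum>k\<in>{0..<card T}. p (e k) z *\<^sub>R \<Phi> z (Fz (e k)))"
        by (simp only: m_def g_def a_def \<rho>_def cs_scaleC_of_real atLeast0LessThan)
      also have "\<dots> = (\<Sum>t\<in>T. p t z *\<^sub>R \<Phi> z (Fz t))"
        by (rule sum.reindex_bij_betw[OF e])
      also have "\<dots> = \<Phi> z (\<Sum>t\<in>T. p t z *\<^sub>R Fz t)"
        by (simp only: ush_sum[OF hom[OF z]] ush_scaleR[OF hom[OF z]])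
      finally have S: "(\<Sum>k<m. g k z *\<^sub>C \<rho> (a k) z) = \<Phi> z (\<Sum>t\<in>T. p t z *\<^sub>R Fz t)" .
      have fz: "f z = \<Phi> z (\<Sum>t\<in>T. p t z *\<^sub>R Fz z)"
        by (simp only: scaleR_sum_left[symmetric] psum[OF z] scaleR_one Finv[OF z])
      have "f z - (\<Sum>k<m. g k z *\<^sub>C \<rho> (a k) z) = \<Phi> z (\<Sum>t\<in>T. p t z *\<^sub>R (Fz z - Fz t))"
        unfolding S fz by (simp only: ush_diff[OF hom[OF z], symmetric] sum_subtractf
            scaleR_diff_right)
      then have "norm (f z - (\<Sum>k<m. g k z *\<^sub>C \<rho> (a k) z)) \<le> norm (\<Sum>t\<in>T. p t z *\<^sub>R (Fz z - Fz t))"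
        using nb[OF z] by simp
      also have "\<dots> \<le> (\<Sum>t\<in>T. norm (p t z *\<^sub>R (Fz z - Fz t)))" by (rule norm_sum)
      also have "\<dots> \<le> (\<Sum>t\<in>T. p t z * (\<epsilon>/2))"
      proof (rule sum_mono)
        fix t assume t: "t \<in> T"
        show "norm (p t z *\<^sub>R (Fz z - Fz t)) \<le> p t z * (\<epsilon>/2)"
        proof (cases "dist z t < \<delta>")
          case True
          have "norm (Fz z - Fz t) < \<epsilon>/2"
            using \<delta>(2)[of t z] True t T(1) z by (auto simp: dist_norm)
          then have "p t z * norm (Fz z - Fz t) \<le> p t z * (\<epsilon>/2)"
            using p0[OF z, of t] by (intro mult_left_mono) auto
          then show ?thesis using p0[OF z, of t] by simp
        next
          case False
          then have "p t z = 0" by (simp add: p_def hh_def)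
          then show ?thesis by simp
        qed
      qed
      also have "\<dots> = (\<Sum>t\<in>T. p t z) * (\<epsilon>/2)" by (simp only: sum_distrib_right)
      also have "\<dots> = \<epsilon>/2" by (simp only: psum[OF z] mult_1_left)
      also have "\<dots> < \<epsilon>" using \<epsilon> by simp
      finally show "norm (f z - (\<Sum>k<m. g k z *\<^sub>C \<rho> (a k) z)) < \<epsilon>" .
    qed
    qed
  qed
qed

end
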